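(* Let $k\ge1$ be an integer, $a,b,c,d\ge0$, $\eta\in\mathbb{R}$, and let $(u_n,v_n)$ be any $(PS)_\eta$-sequence of $I$. Then $(u_n,v_n)$ is bounded in $H^1(\mathbb{R})\times H^1(\mathbb{R})$, and (i) $\|(u_n,v_n)\|_{H^1\times H^1}^2\to\frac{2k+2}{k}\eta$; (ii) $P(u_n,v_n)\to\frac{\eta}{k}$. In particular $\eta\ge0$, and $\eta=0$ if and only if $u_n\to0$ and $v_n\to0$ in $H^1(\mathbb{R})$.
   Context: $H(u,v)=\frac{a}{2k+2}(u^{2k+2}+v^{2k+2})+\frac{b}{k+1}(uv)^{k+1}+\frac{c}{k}u^{k+2}v^k+\frac{d}{k}u^kv^{k+2}$; $P(u,v)=\int H(u,v)dx$; $\|(u,v)\|_{H^1\times H^1}^2=\int(u^2+v^2+u'^2+v'^2)dx$; $I(u,v)=\frac12\|(u,v)\|_{H^1\times H^1}^2-P(u,v)$. A $(PS)_\eta$-sequence of $I$ is a sequence $(u_n,v_n)\subset H^1\times H^1$ with $I(u_n,v_n)\to\eta$ and $I'(u_n,v_n)\to0$ in $H^{-1}\times H^{-1}$. *)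

theory Defs
  imports "HOL-Analysis.Analysis"
begin

definition test_fun :: "(real \<Rightarrow> real) \<Rightarrow> bool" where
  "test_fun \<phi> \<longleftrightarrow> (\<forall>n. ((deriv ^^ n) \<phi>) differentiable_on UNIV)
      \<and> (\<exists>R. \<forall>x. R < \<bar>x\<bar> \<longrightarrow> \<phi> x = 0)"

definition L2 :: "(real \<Rightarrow> real) set" where
  "L2 = {f. f \<in> borel_measurable lborel \<and> integrable lborel (\<lambda>x. (f x)^2)}"

definition is_weak_deriv :: "(real \<Rightarrow> real) \<Rightarrow> (real \<Rightarrow> real) \<Rightarrow> bool" where
  "is_weak_deriv u g \<longleftrightarrow> (\<forall>\<phi>. test_fun \<phi> \<longrightarrow>
      (\<integral>x. u x * deriv \<phi> x \<partial>lborel) = - (\<integral>x. g x * \<phi> x \<partial>lborel))"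

(* H^1(R), functions represented pointwise *)
definition H1 :: "(real \<Rightarrow> real) set" where
  "H1 = {u. u \<in> L2 \<and> (\<exists>g. g \<in> L2 \<and> is_weak_deriv u g)}"

(* the (a.e. unique) weak derivative u' *)
definition wd :: "(real \<Rightarrow> real) \<Rightarrow> real \<Rightarrow> real" where
  "wd u = (SOME g. g \<in> L2 \<and> is_weak_deriv u g)"

definition H1norm2 :: "(real \<Rightarrow> real) \<Rightarrow> real" where
  "H1norm2 u = (\<integral>x. (u x)^2 + (wd u x)^2 \<partial>lborel)"

definition H1H1norm2 :: "(real \<Rightarrow> real) \<Rightarrow> (real \<Rightarrow> real) \<Rightarrow> real" where
  "H1H1norm2 u v = (\<integral>x. (u x)^2 + (v x)^2 + (wd u x)^2 + (wd v x)^2 \<partial>lborel)"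

definition Hfun :: "nat \<Rightarrow> real \<Rightarrow> real \<Rightarrow> real \<Rightarrow> real \<Rightarrow> real \<Rightarrow> real \<Rightarrow> real" where
  "Hfun k a b c d s t =
     a / (2 * real k + 2) * (s ^ (2*k+2) + t ^ (2*k+2))
   + b / (real k + 1) * (s * t) ^ (k+1)
   + c / real k * s ^ (k+2) * t ^ k
   + d / real k * s ^ k * t ^ (k+2)"

definition Pfun :: "nat \<Rightarrow> real \<Rightarrow> real \<Rightarrow> real \<Rightarrow> real \<Rightarrow> (real \<Rightarrow> real) \<Rightarrow> (real \<Rightarrow> real) \<Rightarrow> real" where
  "Pfun k a b c d u v = (\<integral>x. Hfun k a b c d (u x) (v x) \<partial>lborel)"

definition Ifun :: "nat \<Rightarrow> real \<Rightarrow> real \<Rightarrow> real \<Rightarrow> real \<Rightarrow> (real \<Rightarrow> real) \<Rightarrow> (real \<Rightarrow> real) \<Rightarrow> real" where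
  "Ifun k a b c d u v = H1H1norm2 u v / 2 - Pfun k a b c d u v"

(* I'(u,v) applied to the direction (\<phi>,\<psi>) (Gateaux = Frechet derivative, I is C^1) *)
definition dIfun :: "nat \<Rightarrow> real \<Rightarrow> real \<Rightarrow> real \<Rightarrow> real \<Rightarrow> (real \<Rightarrow> real) \<Rightarrow> (real \<Rightarrow> real)
      \<Rightarrow> (real \<Rightarrow> real) \<Rightarrow> (real \<Rightarrow> real) \<Rightarrow> real" where
  "dIfun k a b c d u v \<phi> \<psi> =
     deriv (\<lambda>t. Ifun k a b c d (\<lambda>x. u x + t * \<phi> x) (\<lambda>x. v x + t * \<psi> x)) 0"

(* (PS)_\<eta> sequence: I(u_n,v_n) \<rightarrow> \<eta>, I'(u_n,v_n) \<rightarrow> 0 in H^{-1} x H^{-1} (dual norm) *)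
definition PS_seq :: "nat \<Rightarrow> real \<Rightarrow> real \<Rightarrow> real \<Rightarrow> real \<Rightarrow> real
      \<Rightarrow> (nat \<Rightarrow> real \<Rightarrow> real) \<Rightarrow> (nat \<Rightarrow> real \<Rightarrow> real) \<Rightarrow> bool" where
  "PS_seq k a b c d \<eta> u v \<longleftrightarrow>
     (\<forall>n. u n \<in> H1 \<and> v n \<in> H1)
   \<and> (\<lambda>n. Ifun k a b c d (u n) (v n)) \<longlonglongrightarrow> \<eta>
   \<and> (\<forall>\<epsilon>>0. \<forall>\<^sub>F n in sequentially. \<forall>\<phi>\<in>H1. \<forall>\<psi>\<in>H1.
         \<bar>dIfun k a b c d (u n) (v n) \<phi> \<psi>\<bar> \<le> \<epsilon> * sqrt (H1H1norm2 \<phi> \<psi>))"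

end

theory Submission
  imports Defs
begin

definition G :: "real \<Rightarrow> nat \<Rightarrow> real \<Rightarrow> real" where
  "G c j t = (if t > 0 then exp (-c/t) / t^j else 0)"

lemma G_lim:
  assumes c: "c > 0"
  shows "((\<lambda>t. exp(-c/t)/t^j) \<longlongrightarrow> 0) (at_right (0::real))"
proof -
  have 1: "((\<lambda>s::real. s^j / exp s) \<longlongrightarrow> 0) at_top" by (rule tendsto_power_div_exp_0)
  have 2: "filterlim (\<lambda>t::real. c * inverse t) at_top (at_right 0)"
    by (rule filterlim_tendsto_pos_mult_at_top[OF tendsto_const c filterlim_inverse_at_top_right])
  have 3: "((\<lambda>t. (c * inverse t)^j / exp (c * inverse t)) \<longlongrightarrow> 0) (at_right (0::real))"
    by (rule filterlim_compose[OF 1 2])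
  have 4: "((\<lambda>t. (c * inverse t)^j / exp (c * inverse t) / c^j) \<longlongrightarrow> 0) (at_right (0::real))"
    using tendsto_divide[OF 3 tendsto_const[of "c^j"]] c by simp
  show ?thesis
  proof (rule Lim_transform_eventually[OF 4])
    show "\<forall>\<^sub>F t in at_right 0. (c * inverse t)^j / exp (c * inverse t) / c^j = exp(-c/t)/t^j"
      unfolding eventually_at_right_field using c
      by (intro exI[of _ 1]) (auto simp: power_mult_distrib exp_minus field_simps)
  qed
qed

lemma G_deriv0:
  assumes c: "c > 0"
  shows "(G c j has_real_derivative 0) (at 0)"
proof -
  have "((\<lambda>y. (G c j y - G c j 0) / (y - 0)) \<longlongrightarrow> 0) (at 0)"
    unfolding filterlim_at_split
  proof
    show "((\<lambda>y. (G c j y - G c j 0) / (y - 0)) \<longlongrightarrow> 0) (at_left 0)"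
      by (rule Lim_transform_eventually[OF tendsto_const])
         (auto simp: eventually_at_left_field G_def intro!: exI[of _ "-1"])
    show "((\<lambda>y. (G c j y - G c j 0) / (y - 0)) \<longlongrightarrow> 0) (at_right 0)"
      by (rule Lim_transform_eventually[OF G_lim[OF c, of "Suc j"]])
         (auto simp: eventually_at_right_field G_def intro!: exI[of _ "1"])
  qed
  then show ?thesis by (simp add: has_field_derivative_iff)
qed

lemma G_deriv:
  assumes c: "c > 0"
  shows "(G c j has_real_derivative (c * G c (j+2) t - real j * G c (j+1) t)) (at t)"
proof (cases "t > 0")
  case True
  have "((\<lambda>t. exp (-c/t) / t^j) has_real_derivative (c * G c (j+2) t - real j * G c (j+1) t)) (at t)"
  proof -
    have dinv: "((\<lambda>t. inverse t ^ j) has_real_derivative (- real j * inverse t ^ (j+1))) (at t)"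
    proof (cases j)
      case 0 then show ?thesis by simp
    next
      case (Suc m)
      have "((\<lambda>t. inverse t ^ Suc m) has_real_derivative (1 + real m) * (- (inverse t ^ Suc (Suc 0)) * inverse t ^ m)) (at t)"
        using True by (intro DERIV_power_Suc DERIV_inverse) simp
      then show ?thesis unfolding Suc by (rule DERIV_cong) (use True in \<open>simp add: field_simps\<close>)
    qed
    have "((\<lambda>t. exp (-c/t) * inverse t ^ j) has_real_derivative
        exp (-c/t) * (c / t^2) * inverse t ^ j + exp (-c/t) * (- real j * inverse t ^ (j+1))) (at t)"
    proof -
      have e: "((\<lambda>t. exp (-c/t)) has_real_derivative exp(-c/t) * (c/t^2)) (at t)"
        using True by (auto intro!: derivative_eq_intros simp: power2_eq_square field_simps)
      show ?thesis using DERIV_mult[OF e dinv] by (rule DERIV_cong) (simp add: algebra_simps)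
    qed
    moreover have "exp (-c/t) * (c / t^2) * inverse t ^ j + exp (-c/t) * (- real j * inverse t ^ (j+1))
       = c * G c (j+2) t - real j * G c (j+1) t"
      using True by (auto simp: G_def power2_eq_square field_simps)
    moreover have "(\<lambda>t. exp (-c/t) * inverse t ^ j) = (\<lambda>t. exp (-c/t) / t^j)"
      by (auto simp: field_simps)
    ultimately show ?thesis by simp
  qed
  then show ?thesis
    by (rule has_field_derivative_transform_within_open[of _ _ _ "{0<..}"]) (use True in \<open>auto simp: G_def\<close>)
next
  case False
  show ?thesis
  proof (cases "t = 0")
    case True
    then show ?thesis using G_deriv0[OF c, of j] by (simp add: G_def)
  next
    case False
    with \<open>\<not> t > 0\<close> have t: "t < 0" by simp
    have "((\<lambda>t. 0) has_real_derivative 0) (at t)" by simp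
    then have "(G c j has_real_derivative 0) (at t)"
      by (rule has_field_derivative_transform_within_open[of _ _ _ "{..<0}"]) (use t in \<open>auto simp: G_def\<close>)
    then show ?thesis using t by (simp add: G_def)
  qed
qed

inductive_set T :: "real \<Rightarrow> real \<Rightarrow> real \<Rightarrow> (real \<Rightarrow> real) set" for c a b where
  base: "(\<lambda>x. poly p x * G c j ((x - a) * (b - x))) \<in> T c a b"
| add: "f \<in> T c a b \<Longrightarrow> g \<in> T c a b \<Longrightarrow> (\<lambda>x. f x + g x) \<in> T c a b"

lemma T_deriv:
  assumes c: "c > 0" and f: "f \<in> T c a b"
  shows "\<exists>f'\<in>T c a b. \<forall>x. (f has_real_derivative f' x) (at x)"
  using f
proof induction
  case (base p j)
  define r where "r = p * [:a+b, -2:]"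
  let ?f' = "\<lambda>x. poly (pderiv p) x * G c j ((x - a) * (b - x))
     + (poly (smult c r) x * G c (j+2) ((x - a) * (b - x))
     + poly (smult (- real j) r) x * G c (j+1) ((x - a) * (b - x)))"
  have "?f' \<in> T c a b" by (intro T.add T.base)
  moreover have "((\<lambda>x. poly p x * G c j ((x - a) * (b - x))) has_real_derivative ?f' x) (at x)" for x
  proof -
    have q: "((\<lambda>x. (x - a) * (b - x)) has_real_derivative (a + b - 2*x)) (at x)"
      by (auto intro!: derivative_eq_intros)
    have g: "((\<lambda>x. G c j ((x - a) * (b - x))) has_real_derivative
       (c * G c (j+2) ((x - a) * (b - x)) - real j * G c (j+1) ((x - a) * (b - x))) * (a + b - 2*x)) (at x)"
      by (rule DERIV_chain2[OF G_deriv[OF c] q])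
    show ?thesis using DERIV_mult[OF poly_DERIV[of p x] g]
      by (rule DERIV_cong) (simp add: r_def algebra_simps)
  qed
  ultimately show ?case by (intro bexI[of _ ?f']) auto
next
  case (add f g)
  then obtain f' g' where "f' \<in> T c a b" "g' \<in> T c a b"
     "\<forall>x. (f has_real_derivative f' x) (at x)" "\<forall>x. (g has_real_derivative g' x) (at x)" by blast
  then show ?case by (intro bexI[of _ "\<lambda>x. f' x + g' x"]) (auto intro!: DERIV_add T.add)
qed

lemma T_smooth:
  assumes c: "c > 0" and f: "f \<in> T c a b"
  shows "(deriv ^^ n) f \<in> T c a b \<and> (deriv ^^ n) f differentiable_on UNIV"
proof -
  have "(deriv ^^ n) f \<in> T c a b"
  proof (induction n)
    case 0 then show ?case using f by simp
  next
    case (Suc n)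
    then obtain f' where "f' \<in> T c a b" "\<forall>x. ((deriv ^^ n) f has_real_derivative f' x) (at x)"
      using T_deriv[OF c] by blast
    moreover then have "deriv ((deriv ^^ n) f) = f'" by (intro ext DERIV_imp_deriv) auto
    ultimately show ?case by simp
  qed
  moreover then have "(deriv ^^ n) f differentiable_on UNIV"
    using T_deriv[OF c] unfolding differentiable_on_def
    by (metis real_differentiable_def differentiable_at_withinI)
  ultimately show ?thesis by blast
qed

lemma G_test:
  assumes c: "c > 0" and ab: "a < b"
  shows "test_fun (\<lambda>x. G c 0 ((x - a) * (b - x)))"
proof -
  have "(\<lambda>x. poly 1 x * G c 0 ((x - a) * (b - x))) \<in> T c a b" by (rule T.base)
  then have "(\<lambda>x. G c 0 ((x - a) * (b - x))) \<in> T c a b" by simp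
  note T_smooth[OF c this]
  moreover have "\<forall>x. \<bar>a\<bar> + \<bar>b\<bar> < \<bar>x\<bar> \<longrightarrow> G c 0 ((x - a) * (b - x)) = 0"
  proof (intro allI impI)
    fix x assume x: "\<bar>a\<bar> + \<bar>b\<bar> < \<bar>x\<bar>"
    then have "x < a \<or> x > b" by linarith
    then have "(x - a) * (b - x) < 0"
    proof
      assume "x < a" then show ?thesis using ab by (intro mult_neg_pos) auto
    next
      assume "b < x" then show ?thesis using ab by (intro mult_pos_neg) auto
    qed
    then show "G c 0 ((x - a) * (b - x)) = 0" by (simp add: G_def)
  qed
  ultimately show ?thesis unfolding test_fun_def by blast
qed

lemma G_meas[measurable]: "G c j \<in> borel_measurable borel"
  unfolding G_def by measurable

lemma G_bounds: "c > 0 \<Longrightarrow> 0 \<le> G c 0 t \<and> G c 0 t \<le> 1"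
  by (auto simp: G_def)

lemma abs_le_sq1: "\<bar>y::real\<bar> \<le> y ^ 2 + 1"
proof (cases "\<bar>y\<bar> \<le> 1")
  case True then show ?thesis using zero_le_power2[of y] by linarith
next
  case False
  have "\<bar>y\<bar> * 1 \<le> \<bar>y\<bar> * \<bar>y\<bar>" by (rule mult_left_mono) (use False in auto)
  also have "\<bar>y\<bar> * \<bar>y\<bar> = y ^ 2" by (simp add: power2_eq_square abs_mult_self_eq)
  finally show ?thesis by linarith
qed

lemma interval_zero:
  assumes hm: "h \<in> borel_measurable lborel" and hi: "integrable lborel (\<lambda>x. h x ^ 2)"
    and z: "\<And>c a b. c > 0 \<Longrightarrow> a < b \<Longrightarrow> (\<integral>x. h x * G c 0 ((x - a) * (b - x)) \<partial>lborel) = 0"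
  shows "(\<integral>x. h x * indicator {a<..<b} x \<partial>lborel) = 0"
proof (cases "a < b")
  case False
  then have "{a<..<b} = {}" by auto
  then show ?thesis by simp
next
  case ab: True
  define s where "s i x = h x * G (inverse (real (Suc i))) 0 ((x - a) * (b - x))" for i x
  define w where "w x = h x ^ 2 + indicator {a..b} x" for x
  have hm': "h \<in> borel_measurable borel" using hm by simp
  have "(\<lambda>i. integral\<^sup>L lborel (s i)) \<longlonglongrightarrow> (\<integral>x. h x * indicator {a<..<b} x \<partial>lborel)"
  proof (rule integral_dominated_convergence[where w = w])
    show "(\<lambda>x. h x * indicator {a<..<b} x) \<in> borel_measurable lborel" using hm by measurable
    show "s i \<in> borel_measurable lborel" for i unfolding s_def using hm' by measurable
    show "integrable lborel w" unfolding w_def using hi by (intro Bochner_Integration.integrable_add integrable_real_indicator) (auto simp: emeasure_lborel_Icc_eq)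
    show "AE x in lborel. (\<lambda>i. s i x) \<longlonglongrightarrow> h x * indicator {a<..<b} x"
    proof (intro AE_I2)
      fix x
      show "(\<lambda>i. s i x) \<longlonglongrightarrow> h x * indicator {a<..<b} x"
      proof (cases "a < x \<and> x < b")
        case True
        then have q: "(x - a) * (b - x) > 0" by simp
        have "(\<lambda>i. h x * exp (- inverse (real (Suc i)) / ((x - a) * (b - x)))) \<longlonglongrightarrow> h x * exp (- 0 / ((x - a) * (b - x)))"
          by (intro tendsto_intros LIMSEQ_inverse_real_of_nat) (use q in auto)
        then show ?thesis using True q by (simp add: s_def G_def)
      next
        case False
        then have "x \<le> a \<or> b \<le> x" by linarith
        then have "(x - a) * (b - x) \<le> 0"
        proof
          assume "x \<le> a" then show ?thesis using ab by (intro mult_nonpos_nonneg) auto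
        next
          assume "b \<le> x" then show ?thesis using ab by (intro mult_nonneg_nonpos) auto
        qed
        then show ?thesis using False by (simp add: s_def G_def)
      qed
    qed
    show "AE x in lborel. norm (s i x) \<le> w x" for i
    proof (intro AE_I2)
      fix x
      have g: "0 \<le> G (inverse (real (Suc i))) 0 ((x - a) * (b - x)) \<and> G (inverse (real (Suc i))) 0 ((x - a) * (b - x)) \<le> 1"
        by (rule G_bounds) simp
      have h1: "\<bar>h x\<bar> \<le> h x ^ 2 + 1"
        by (rule abs_le_sq1)
      show "norm (s i x) \<le> w x"
      proof (cases "a \<le> x \<and> x \<le> b")
        case True
        have "\<bar>s i x\<bar> \<le> \<bar>h x\<bar>" unfolding s_def using g
          by (simp add: abs_mult mult_left_le)
        then show ?thesis using True h1 by (simp add: w_def)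
      next
        case False
        then have "x < a \<or> b < x" by linarith
        then have "(x - a) * (b - x) < 0"
        proof
          assume "x < a" then show ?thesis using ab by (intro mult_neg_pos) auto
        next
          assume "b < x" then show ?thesis using ab by (intro mult_pos_neg) auto
        qed
        then show ?thesis using False by (simp add: s_def G_def w_def)
      qed
    qed
  qed
  moreover have "integral\<^sup>L lborel (s i) = 0" for i unfolding s_def by (rule z) (use ab in auto)
  ultimately show ?thesis using LIMSEQ_unique[of "\<lambda>i. 0::real"] by simp
qed

lemma AE_zero_Ioi:
  fixes f :: "real \<Rightarrow> real"
  assumes int: "integrable lborel f" and z: "\<And>x. (\<integral>y. f y * indicator {x<..} y \<partial>lborel) = 0"
  shows "AE y in lborel. f y = 0"
proof -
  have fm[measurable]: "f \<in> borel_measurable borel"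
    using borel_measurable_integrable[OF int] by simp
  have ints: "integrable lborel (\<lambda>y. max 0 (s * f y) * indicator {x<..} y)" for s x
    by (intro integrable_real_mult_indicator integrable_max integrable_mult_right int) auto
  have e: "emeasure (density lborel (\<lambda>y. ennreal (s * f y))) {x<..}
      = ennreal (\<integral>y. max 0 (s * f y) * indicator {x<..} y \<partial>lborel)" for s x
  proof -
    have "emeasure (density lborel (\<lambda>y. ennreal (s * f y))) {x<..}
        = (\<integral>\<^sup>+ y. ennreal (s * f y) * indicator {x<..} y \<partial>lborel)"
      by (rule emeasure_density) auto
    also have "\<dots> = (\<integral>\<^sup>+ y. ennreal (max 0 (s * f y) * indicator {x<..} y) \<partial>lborel)"
      by (intro nn_integral_cong) (auto split: split_indicator simp: ennreal_max_0)
    also have "\<dots> = ennreal (\<integral>y. max 0 (s * f y) * indicator {x<..} y \<partial>lborel)"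
      by (intro nn_integral_eq_integral ints) (auto split: split_indicator)
    finally show ?thesis .
  qed
  have eq: "(\<integral>y. max 0 (1 * f y) * indicator {x<..} y \<partial>lborel)
      = (\<integral>y. max 0 ((-1) * f y) * indicator {x<..} y \<partial>lborel)" for x
  proof -
    have "(\<integral>y. max 0 (1 * f y) * indicator {x<..} y \<partial>lborel)
        - (\<integral>y. max 0 ((-1) * f y) * indicator {x<..} y \<partial>lborel)
        = (\<integral>y. max 0 (1 * f y) * indicator {x<..} y - max 0 ((-1) * f y) * indicator {x<..} y \<partial>lborel)"
      by (rule Bochner_Integration.integral_diff[symmetric]) (rule ints)+
    also have "\<dots> = (\<integral>y. f y * indicator {x<..} y \<partial>lborel)"
      by (intro Bochner_Integration.integral_cong) (auto split: split_indicator)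
    finally show ?thesis using z[of x] by simp
  qed
  have "density lborel (\<lambda>y. ennreal (1 * f y)) = density lborel (\<lambda>y. ennreal ((-1) * f y))"
  proof (rule measure_eqI_lessThan)
    show "emeasure (density lborel (\<lambda>y. ennreal (1 * f y))) {x<..} < \<infinity>" for x
      unfolding e by simp
    show "emeasure (density lborel (\<lambda>y. ennreal (1 * f y))) {x<..} =
          emeasure (density lborel (\<lambda>y. ennreal ((-1) * f y))) {x<..}" for x
      unfolding e eq ..
  qed auto
  then have "AE y in lborel. ennreal (1 * f y) = ennreal ((-1) * f y)"
    by (intro sigma_finite_measure.density_unique[OF sigma_finite_lborel]) auto
  then show ?thesis
  proof (rule AE_mp, intro AE_I2 impI)
    fix y assume "ennreal (1 * f y) = ennreal ((-1) * f y)"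
    then show "f y = 0"
      by (cases "f y > 0"; cases "f y < 0") (auto simp: ennreal_eq_0_iff ennreal_neg)
  qed
qed

lemma fund_lemma:
  assumes hm: "h \<in> borel_measurable lborel" and hi: "integrable lborel (\<lambda>x. h x ^ 2)"
    and z: "\<And>c a b. c > 0 \<Longrightarrow> a < b \<Longrightarrow> (\<integral>x. h x * G c 0 ((x - a) * (b - x)) \<partial>lborel) = 0"
  shows "AE x in lborel. h x = 0"
proof -
  have hm'[measurable]: "h \<in> borel_measurable borel" using hm by simp
  have "AE x in lborel. h x * indicator {- real N<..<real N} x = 0" for N :: nat
  proof (rule AE_zero_Ioi)
    show "integrable lborel (\<lambda>x. h x * indicator {- real N<..<real N} x)"
    proof (rule Bochner_Integration.integrable_bound[of lborel "\<lambda>x. h x ^ 2 + indicator {- real N..real N} x"])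
      show "integrable lborel (\<lambda>x. h x ^ 2 + indicator {- real N..real N} x)"
        using hi by (intro Bochner_Integration.integrable_add integrable_real_indicator) (auto simp: emeasure_lborel_Icc_eq)
      show "(\<lambda>x. h x * indicator {- real N<..<real N} x) \<in> borel_measurable lborel" by measurable
      show "AE x in lborel. norm (h x * indicator {- real N<..<real N} x) \<le> norm (h x ^ 2 + indicator {- real N..real N} x)"
        using abs_le_sq1 by (intro AE_I2) (auto split: split_indicator)
    qed
    show "(\<integral>y. h y * indicator {- real N<..<real N} y * indicator {x<..} y \<partial>lborel) = 0" for x
    proof -
      have "(\<integral>y. h y * indicator {- real N<..<real N} y * indicator {x<..} y \<partial>lborel)
          = (\<integral>y. h y * indicator {max x (- real N)<..<real N} y \<partial>lborel)"
        by (intro Bochner_Integration.integral_cong) (auto split: split_indicator)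
      also have "\<dots> = 0" by (rule interval_zero[OF hm hi z])
      finally show ?thesis .
    qed
  qed
  then have "AE x in lborel. \<forall>N::nat. h x * indicator {- real N<..<real N} x = 0"
    by (subst AE_all_countable) blast
  then show ?thesis
  proof (rule AE_mp, intro AE_I2 impI)
    fix x assume A: "\<forall>N::nat. h x * indicator {- real N<..<real N} x = 0"
    obtain N :: nat where "\<bar>x\<bar> < real N" using reals_Archimedean2 by blast
    then show "h x = 0" using A[rule_format, of N] by (auto split: split_indicator_asm)
  qed
qed

lemma sq_diff_le: "((x::real) - y)^2 \<le> 2 * x^2 + 2 * y^2"
proof -
  have "0 \<le> (x + y)^2" by simp
  then show ?thesis unfolding power2_diff power2_sum by linarith
qed

lemma integrable_G_mult:
  assumes gm: "g \<in> borel_measurable lborel" and gi: "integrable lborel (\<lambda>x. g x ^ 2)"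
    and c: "c > 0"
  shows "integrable lborel (\<lambda>x. g x * G c 0 ((x - a) * (b - x)))"
proof (rule Bochner_Integration.integrable_bound[of lborel "\<lambda>x. g x ^ 2 + indicator {min a b..max a b} x"])
  have gm'[measurable]: "g \<in> borel_measurable borel" using gm by simp
  show "integrable lborel (\<lambda>x. g x ^ 2 + indicator {min a b..max a b} x)"
    using gi by (intro Bochner_Integration.integrable_add integrable_real_indicator) (auto simp: emeasure_lborel_Icc_eq)
  show "(\<lambda>x. g x * G c 0 ((x - a) * (b - x))) \<in> borel_measurable lborel" by measurable
  show "AE x in lborel. norm (g x * G c 0 ((x - a) * (b - x))) \<le> norm (g x ^ 2 + indicator {min a b..max a b} x)"
  proof (intro AE_I2)
    fix x
    have gb: "0 \<le> G c 0 ((x - a) * (b - x)) \<and> G c 0 ((x - a) * (b - x)) \<le> 1"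
      by (rule G_bounds[OF c])
    have h1: "\<bar>g x\<bar> \<le> g x ^ 2 + 1" by (rule abs_le_sq1)
    show "norm (g x * G c 0 ((x - a) * (b - x))) \<le> norm (g x ^ 2 + indicator {min a b..max a b} x)"
    proof (cases "min a b \<le> x \<and> x \<le> max a b")
      case True
      have "\<bar>g x * G c 0 ((x - a) * (b - x))\<bar> \<le> \<bar>g x\<bar>" using gb
        by (simp add: abs_mult mult_left_le)
      then show ?thesis using True h1 by simp
    next
      case False
      then have "x < min a b \<or> max a b < x" by linarith
      then have "(x - a) * (b - x) < 0"
      proof
        assume "x < min a b" then show ?thesis by (intro mult_neg_pos) auto
      next
        assume "max a b < x" then show ?thesis by (intro mult_pos_neg) auto
      qed
      then show ?thesis using False by (simp add: G_def)
    qed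
  qed
qed

lemma wd_unique:
  assumes g1: "g1 \<in> L2" and g2: "g2 \<in> L2" and w1: "is_weak_deriv u g1" and w2: "is_weak_deriv u g2"
  shows "AE x in lborel. g1 x = g2 x"
proof -
  have m1[measurable]: "g1 \<in> borel_measurable borel" and i1: "integrable lborel (\<lambda>x. g1 x ^ 2)"
    using g1 by (auto simp: L2_def)
  have m2[measurable]: "g2 \<in> borel_measurable borel" and i2: "integrable lborel (\<lambda>x. g2 x ^ 2)"
    using g2 by (auto simp: L2_def)
  have "AE x in lborel. g1 x - g2 x = 0"
  proof (rule fund_lemma)
    show "(\<lambda>x. g1 x - g2 x) \<in> borel_measurable lborel" by measurable
    show "integrable lborel (\<lambda>x. (g1 x - g2 x) ^ 2)"
    proof (rule Bochner_Integration.integrable_bound[of lborel "\<lambda>x. 2 * g1 x ^ 2 + 2 * g2 x ^ 2"])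
      show "integrable lborel (\<lambda>x. 2 * g1 x ^ 2 + 2 * g2 x ^ 2)" using i1 i2 by auto
      show "(\<lambda>x. (g1 x - g2 x) ^ 2) \<in> borel_measurable lborel" by measurable
      show "AE x in lborel. norm ((g1 x - g2 x) ^ 2) \<le> norm (2 * g1 x ^ 2 + 2 * g2 x ^ 2)"
        using sq_diff_le by (intro AE_I2) simp
    qed
    fix c a b :: real assume c: "c > 0" and ab: "a < b"
    let ?\<phi> = "\<lambda>x. G c 0 ((x - a) * (b - x))"
    have t: "test_fun ?\<phi>" by (rule G_test[OF c ab])
    have j1: "integrable lborel (\<lambda>x. g1 x * ?\<phi> x)" by (rule integrable_G_mult[OF _ i1 c]) simp
    have j2: "integrable lborel (\<lambda>x. g2 x * ?\<phi> x)" by (rule integrable_G_mult[OF _ i2 c]) simp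
    have e: "(\<integral>x. g1 x * ?\<phi> x \<partial>lborel) = (\<integral>x. g2 x * ?\<phi> x \<partial>lborel)"
    proof -
      have "(\<integral>x. u x * deriv ?\<phi> x \<partial>lborel) = - (\<integral>x. g1 x * ?\<phi> x \<partial>lborel)"
        using w1 t unfolding is_weak_deriv_def by blast
      moreover have "(\<integral>x. u x * deriv ?\<phi> x \<partial>lborel) = - (\<integral>x. g2 x * ?\<phi> x \<partial>lborel)"
        using w2 t unfolding is_weak_deriv_def by blast
      ultimately show ?thesis by linarith
    qed
    have "(\<integral>x. (g1 x - g2 x) * ?\<phi> x \<partial>lborel) = (\<integral>x. g1 x * ?\<phi> x - g2 x * ?\<phi> x \<partial>lborel)"
      by (simp add: left_diff_distrib)
    also have "\<dots> = 0" using e j1 j2 by simp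
    finally show "(\<integral>x. (g1 x - g2 x) * ?\<phi> x \<partial>lborel) = 0" .
  qed
  then show ?thesis by auto
qed

lemma H1_wd:
  assumes "u \<in> H1"
  shows "wd u \<in> L2 \<and> is_weak_deriv u (wd u)"
proof -
  obtain g where "g \<in> L2 \<and> is_weak_deriv u g" using assms unfolding H1_def by blast
  then show ?thesis unfolding wd_def by (rule someI[where x = g])
qed

lemma wd_some:
  assumes "g \<in> L2" "is_weak_deriv w g"
  shows "wd w \<in> L2 \<and> is_weak_deriv w (wd w)"
proof -
  have "g \<in> L2 \<and> is_weak_deriv w g" using assms by blast
  then show ?thesis unfolding wd_def by (rule someI[where x = g])
qed

lemma wd_scale:
  assumes u: "u \<in> H1"
  shows "wd (\<lambda>x. s * u x) \<in> L2 \<and> (AE x in lborel. wd (\<lambda>x. s * u x) x = s * wd u x)"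
proof -
  have w: "wd u \<in> L2" "is_weak_deriv u (wd u)" using H1_wd[OF u] by auto
  have L: "(\<lambda>x. s * wd u x) \<in> L2"
  proof -
    have m: "wd u \<in> borel_measurable lborel" and i: "integrable lborel (\<lambda>x. wd u x ^ 2)"
      using w(1) unfolding L2_def by auto
    have "integrable lborel (\<lambda>x. s^2 * wd u x ^ 2)" using i by (rule integrable_mult_right)
    then have "integrable lborel (\<lambda>x. (s * wd u x) ^ 2)" by (simp add: power_mult_distrib)
    moreover have "(\<lambda>x. s * wd u x) \<in> borel_measurable lborel" using m by simp
    ultimately show ?thesis unfolding L2_def by blast
  qed
  have W: "is_weak_deriv (\<lambda>x. s * u x) (\<lambda>x. s * wd u x)"
    unfolding is_weak_deriv_def
  proof (intro allI impI)
    fix \<phi> :: "real \<Rightarrow> real" assume t: "test_fun \<phi>"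
    have e: "(\<integral>x. u x * deriv \<phi> x \<partial>lborel) = - (\<integral>x. wd u x * \<phi> x \<partial>lborel)"
      using w(2) t unfolding is_weak_deriv_def by blast
    have "(\<integral>x. s * u x * deriv \<phi> x \<partial>lborel) = (\<integral>x. s * (u x * deriv \<phi> x) \<partial>lborel)"
      by (simp only: mult.assoc)
    also have "\<dots> = s * (\<integral>x. u x * deriv \<phi> x \<partial>lborel)" by (rule integral_mult_right_zero)
    also have "\<dots> = - (s * (\<integral>x. wd u x * \<phi> x \<partial>lborel))" using e by simp
    also have "s * (\<integral>x. wd u x * \<phi> x \<partial>lborel) = (\<integral>x. s * (wd u x * \<phi> x) \<partial>lborel)"
      by (rule integral_mult_right_zero[symmetric])
    also have "\<dots> = (\<integral>x. s * wd u x * \<phi> x \<partial>lborel)" by (simp only: mult.assoc)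
    finally show "(\<integral>x. s * u x * deriv \<phi> x \<partial>lborel) = - (\<integral>x. s * wd u x * \<phi> x \<partial>lborel)" .
  qed
  have "wd (\<lambda>x. s * u x) \<in> L2 \<and> is_weak_deriv (\<lambda>x. s * u x) (wd (\<lambda>x. s * u x))"
    by (rule wd_some[OF L W])
  then show ?thesis using wd_unique[of "wd (\<lambda>x. s * u x)" "\<lambda>x. s * wd u x" "\<lambda>x. s * u x"] L W by auto
qed

lemma L2_meas: "f \<in> L2 \<Longrightarrow> f \<in> borel_measurable borel"
  unfolding L2_def by simp

lemma L2_int: "f \<in> L2 \<Longrightarrow> integrable lborel (\<lambda>x. f x ^ 2)"
  unfolding L2_def by simp

lemma H1_L2: "u \<in> H1 \<Longrightarrow> u \<in> L2"
  unfolding H1_def by simp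

lemma N_scale:
  assumes u: "u \<in> H1" and v: "v \<in> H1"
  shows "H1H1norm2 (\<lambda>x. s * u x) (\<lambda>x. s * v x) = s^2 * H1H1norm2 u v"
proof -
  have A: "wd (\<lambda>x. s * u x) \<in> L2" "AE x in lborel. wd (\<lambda>x. s * u x) x = s * wd u x"
    using wd_scale[OF u, of s] by auto
  have B: "wd (\<lambda>x. s * v x) \<in> L2" "AE x in lborel. wd (\<lambda>x. s * v x) x = s * wd v x"
    using wd_scale[OF v, of s] by auto
  have [measurable]: "u \<in> borel_measurable borel" "v \<in> borel_measurable borel"
    "wd u \<in> borel_measurable borel" "wd v \<in> borel_measurable borel"
    "wd (\<lambda>x. s * u x) \<in> borel_measurable borel" "wd (\<lambda>x. s * v x) \<in> borel_measurable borel"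
    using L2_meas H1_L2 u v H1_wd A(1) B(1) by blast+
  have "H1H1norm2 (\<lambda>x. s * u x) (\<lambda>x. s * v x)
      = (\<integral>x. s^2 * ((u x)^2 + (v x)^2 + (wd u x)^2 + (wd v x)^2) \<partial>lborel)"
    unfolding H1H1norm2_def
  proof (rule integral_cong_AE)
    show "AE x in lborel. (s * u x)\<^sup>2 + (s * v x)\<^sup>2 + (wd (\<lambda>x. s * u x) x)\<^sup>2 + (wd (\<lambda>x. s * v x) x)\<^sup>2 =
        s\<^sup>2 * ((u x)\<^sup>2 + (v x)\<^sup>2 + (wd u x)\<^sup>2 + (wd v x)\<^sup>2)"
      using A(2) B(2) by eventually_elim (simp add: power_mult_distrib distrib_left)
  qed measurable
  also have "\<dots> = s^2 * H1H1norm2 u v" unfolding H1H1norm2_def by (rule integral_mult_right_zero)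
  finally show ?thesis .
qed

lemma Hfun_scale: "Hfun k a b c d (s * x) (s * y) = s^(2*k+2) * Hfun k a b c d x y"
proof -
  have e1: "s^(2*k+2) = s^(k+1) * s^(k+1)" by (simp add: power_add[symmetric] mult_2)
  have e2: "s^(2*k+2) = s^(k+2) * s^k" by (simp add: power_add[symmetric] mult_2)
  have e3: "s^(k*2) = s^k * s^k" by (simp add: power_add[symmetric] mult_2_right)
  show ?thesis unfolding Hfun_def
    by (simp add: power_mult_distrib e1 e2 e3 algebra_simps)
qed

lemma P_scale: "Pfun k a b c d (\<lambda>x. s * u x) (\<lambda>x. s * v x) = s^(2*k+2) * Pfun k a b c d u v"
  unfolding Pfun_def Hfun_scale by (rule integral_mult_right_zero)

lemma dI_self:
  assumes u: "u \<in> H1" and v: "v \<in> H1"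
  shows "dIfun k a b c d u v u v = H1H1norm2 u v - (2 * real k + 2) * Pfun k a b c d u v"
proof -
  define N where "N = H1H1norm2 u v"
  define P where "P = Pfun k a b c d u v"
  have f: "(\<lambda>t. Ifun k a b c d (\<lambda>x. u x + t * u x) (\<lambda>x. v x + t * v x))
      = (\<lambda>t. (1 + t)^2 * N / 2 - (1 + t)^(2*k+2) * P)"
  proof
    fix t :: real
    have "(\<lambda>x. u x + t * u x) = (\<lambda>x. (1 + t) * u x)" "(\<lambda>x. v x + t * v x) = (\<lambda>x. (1 + t) * v x)"
      by (auto simp: algebra_simps)
    then show "Ifun k a b c d (\<lambda>x. u x + t * u x) (\<lambda>x. v x + t * v x) = (1 + t)^2 * N / 2 - (1 + t)^(2*k+2) * P"
      unfolding Ifun_def N_def P_def using N_scale[OF u v] P_scale by simp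
  qed
  have "((\<lambda>t. (1 + t)^2 * N / 2 - (1 + t)^(2*k+2) * P) has_real_derivative (N - (2 * real k + 2) * P)) (at 0)"
    by (rule derivative_eq_intros refl | simp)+
  then have "deriv (\<lambda>t. (1 + t)^2 * N / 2 - (1 + t)^(2*k+2) * P) 0 = N - (2 * real k + 2) * P"
    by (rule DERIV_imp_deriv)
  then show ?thesis unfolding dIfun_def f N_def P_def .
qed

lemma N_split:
  assumes u: "u \<in> H1" and v: "v \<in> H1"
  shows "H1H1norm2 u v = H1norm2 u + H1norm2 v \<and> H1norm2 u \<ge> 0 \<and> H1norm2 v \<ge> 0"
proof -
  have i: "integrable lborel (\<lambda>x. (u x)^2)" "integrable lborel (\<lambda>x. (v x)^2)"
    "integrable lborel (\<lambda>x. (wd u x)^2)" "integrable lborel (\<lambda>x. (wd v x)^2)"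
    using L2_int H1_L2 u v H1_wd by blast+
  have "H1H1norm2 u v = (\<integral>x. ((u x)^2 + (wd u x)^2) + ((v x)^2 + (wd v x)^2) \<partial>lborel)"
    unfolding H1H1norm2_def by (intro Bochner_Integration.integral_cong) auto
  also have "\<dots> = H1norm2 u + H1norm2 v"
    unfolding H1norm2_def using i by (intro Bochner_Integration.integral_add Bochner_Integration.integrable_add)
  finally show ?thesis unfolding H1norm2_def by (auto intro!: integral_nonneg_AE)
qed

lemma sqrt_le_half: "0 \<le> (N::real) \<Longrightarrow> sqrt N \<le> (N + 1) / 2"
proof -
  assume N: "0 \<le> N"
  have "0 \<le> (sqrt N - 1)^2" by simp
  then show ?thesis unfolding power2_diff using N by simp
qed

theorem proposition3p8:
  fixes k :: nat and a b c d \<eta> :: real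
    and u v :: "nat \<Rightarrow> real \<Rightarrow> real"
  assumes "k \<ge> 1" and "a \<ge> 0" and "b \<ge> 0" and "c \<ge> 0" and "d \<ge> 0"
    and "PS_seq k a b c d \<eta> u v"
  shows "(\<exists>M. \<forall>n. H1H1norm2 (u n) (v n) \<le> M)
    \<and> (\<lambda>n. H1H1norm2 (u n) (v n)) \<longlonglongrightarrow> (2 * real k + 2) / real k * \<eta>
    \<and> (\<lambda>n. Pfun k a b c d (u n) (v n)) \<longlonglongrightarrow> \<eta> / real k
    \<and> \<eta> \<ge> 0
    \<and> (\<eta> = 0 \<longleftrightarrow> ((\<lambda>n. H1norm2 (u n)) \<longlonglongrightarrow> 0 \<and> (\<lambda>n. H1norm2 (v n)) \<longlonglongrightarrow> 0))"
proof -
  have k: "real k \<ge> 1" using assms(1) by simp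
  have H: "\<And>n. u n \<in> H1" "\<And>n. v n \<in> H1"
    and I: "(\<lambda>n. Ifun k a b c d (u n) (v n)) \<longlonglongrightarrow> \<eta>"
    and E: "\<And>\<epsilon>. \<epsilon> > 0 \<Longrightarrow> \<forall>\<^sub>F n in sequentially. \<forall>\<phi>\<in>H1. \<forall>\<psi>\<in>H1.
         \<bar>dIfun k a b c d (u n) (v n) \<phi> \<psi>\<bar> \<le> \<epsilon> * sqrt (H1H1norm2 \<phi> \<psi>)"
    using assms(6) unfolding PS_seq_def by blast+
  define N where "N n = H1H1norm2 (u n) (v n)" for n
  define P where "P n = Pfun k a b c d (u n) (v n)" for n
  define J where "J n = Ifun k a b c d (u n) (v n)" for n
  define D where "D n = N n - (2 * real k + 2) * P n" for n
  have J: "J n = N n / 2 - P n" for n unfolding J_def N_def P_def Ifun_def ..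
  have Nsplit: "N n = H1norm2 (u n) + H1norm2 (v n) \<and> H1norm2 (u n) \<ge> 0 \<and> H1norm2 (v n) \<ge> 0" for n
    unfolding N_def using N_split[OF H(1) H(2)] .
  then have N0: "N n \<ge> 0" for n by (simp add: add_nonneg_nonneg)
  have kN: "real k * N n = (2 * real k + 2) * J n - D n" for n
    unfolding J D_def by (simp add: algebra_simps)
  have Dle: "\<forall>\<^sub>F n in sequentially. \<bar>D n\<bar> \<le> \<epsilon> * sqrt (N n)" if "\<epsilon> > 0" for \<epsilon>
    using E[OF that]
  proof eventually_elim
    case (elim n)
    then have "\<bar>dIfun k a b c d (u n) (v n) (u n) (v n)\<bar> \<le> \<epsilon> * sqrt (H1H1norm2 (u n) (v n))"
      using H by blast
    then show ?case unfolding D_def N_def P_def dI_self[OF H(1) H(2)] .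
  qed
  have JI: "J \<longlonglongrightarrow> \<eta>" using I unfolding J_def .
  then obtain B where B: "\<And>n. \<bar>J n\<bar> \<le> B"
    using convergent_imp_Bseq[OF convergentI[OF JI]] unfolding Bseq_def by force
  define X where "X = (2 * real k + 2) * B"
  define C where "C = 2 * X + 1"
  have NC: "\<forall>\<^sub>F n in sequentially. N n \<le> C"
    using Dle[OF zero_less_one]
  proof eventually_elim
    case (elim n)
    have s: "sqrt (N n) \<le> (N n + 1) / 2" by (rule sqrt_le_half[OF N0])
    have "real k * N n \<le> X + (N n + 1) / 2"
    proof -
      have "(2 * real k + 2) * J n \<le> X"
        unfolding X_def using B[of n] by (intro mult_left_mono) auto
      then show ?thesis using kN[of n] elim s by linarith
    qed
    moreover have "N n \<le> real k * N n" using k N0[of n] by (simp add: mult_le_cancel_right1)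
    ultimately have "N n \<le> X + (N n + 1) / 2" by (rule order_trans[rotated])
    then show ?case unfolding C_def by (simp add: field_simps)
  qed
  have C0: "C \<ge> 0"
  proof -
    from NC obtain n where "N n \<le> C" by (auto simp: eventually_sequentially)
    then show ?thesis using N0[of n] by linarith
  qed
  have D0: "D \<longlonglongrightarrow> 0"
  proof (rule tendstoI)
    fix e :: real assume e: "e > 0"
    define \<epsilon> where "\<epsilon> = e / (sqrt C + 1)"
    have \<epsilon>: "\<epsilon> > 0" unfolding \<epsilon>_def using e C0 by (intro divide_pos_pos) (auto intro: add_nonneg_pos)
    show "\<forall>\<^sub>F n in sequentially. dist (D n) 0 < e"
      using Dle[OF \<epsilon>] NC
    proof eventually_elim
      case (elim n)
      have "sqrt (N n) \<le> sqrt C" using elim(2) by simp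
      then have "\<epsilon> * sqrt (N n) \<le> \<epsilon> * sqrt C" using \<epsilon> by (intro mult_left_mono) auto
      also have "\<epsilon> * sqrt C < e"
      proof -
        have sc: "sqrt C \<ge> 0" using C0 by simp
        have "e * sqrt C < e * (sqrt C + 1)" using e by simp
        moreover have pos: "sqrt C + 1 > 0" using sc by linarith
        ultimately have "(e * sqrt C) / (sqrt C + 1) < e" by (simp add: pos_divide_less_eq[OF pos])
        then show ?thesis unfolding \<epsilon>_def by simp
      qed
      finally show ?case using elim(1) by simp
    qed
  qed
  have NL: "N \<longlonglongrightarrow> (2 * real k + 2) / real k * \<eta>"
  proof -
    have "(\<lambda>n. ((2 * real k + 2) * J n - D n) / real k) \<longlonglongrightarrow> ((2 * real k + 2) * \<eta> - 0) / real k"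
      by (intro tendsto_intros JI D0) (use k in auto)
    moreover have "(\<lambda>n. ((2 * real k + 2) * J n - D n) / real k) = N"
      using kN k by (auto simp: field_simps)
    ultimately show ?thesis by simp
  qed
  have PL: "P \<longlonglongrightarrow> \<eta> / real k"
  proof -
    have "(\<lambda>n. N n / 2 - J n) \<longlonglongrightarrow> (2 * real k + 2) / real k * \<eta> / 2 - \<eta>"
      by (intro tendsto_intros NL JI) simp
    moreover have "(\<lambda>n. N n / 2 - J n) = P" using J by auto
    moreover have "(2 * real k + 2) / real k * \<eta> / 2 - \<eta> = \<eta> / real k"
      using k by (simp add: field_simps)
    ultimately show ?thesis by simp
  qed
  have eta0: "\<eta> \<ge> 0"
  proof -
    have "0 \<le> (2 * real k + 2) / real k * \<eta>"
      by (rule LIMSEQ_le_const[OF NL]) (use N0 in auto)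
    moreover have "(2 * real k + 2) / real k > 0" using k by simp
    ultimately show ?thesis by (metis zero_le_mult_iff not_less)
  qed
  have bnd: "\<exists>M. \<forall>n. N n \<le> M"
    using convergent_imp_Bseq[OF convergentI[OF NL]] unfolding Bseq_def by (metis abs_le_D1 real_norm_def)
  have iff: "\<eta> = 0 \<longleftrightarrow> ((\<lambda>n. H1norm2 (u n)) \<longlonglongrightarrow> 0 \<and> (\<lambda>n. H1norm2 (v n)) \<longlonglongrightarrow> 0)"
  proof
    assume "\<eta> = 0"
    then have N00: "N \<longlonglongrightarrow> 0" using NL by simp
    show "(\<lambda>n. H1norm2 (u n)) \<longlonglongrightarrow> 0 \<and> (\<lambda>n. H1norm2 (v n)) \<longlonglongrightarrow> 0"
    proof
      show "(\<lambda>n. H1norm2 (u n)) \<longlonglongrightarrow> 0"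
        by (rule tendsto_sandwich[OF _ _ tendsto_const N00]) (use Nsplit in auto)
      show "(\<lambda>n. H1norm2 (v n)) \<longlonglongrightarrow> 0"
        by (rule tendsto_sandwich[OF _ _ tendsto_const N00]) (use Nsplit in auto)
    qed
  next
    assume A: "(\<lambda>n. H1norm2 (u n)) \<longlonglongrightarrow> 0 \<and> (\<lambda>n. H1norm2 (v n)) \<longlonglongrightarrow> 0"
    then have "(\<lambda>n. H1norm2 (u n) + H1norm2 (v n)) \<longlonglongrightarrow> 0 + 0" by (intro tendsto_add) auto
    moreover have "N = (\<lambda>n. H1norm2 (u n) + H1norm2 (v n))" using Nsplit by auto
    ultimately have "N \<longlonglongrightarrow> 0" by simp
    then have "(2 * real k + 2) / real k * \<eta> = 0" using NL LIMSEQ_unique by blast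
    then show "\<eta> = 0" using k by simp
  qed
  show ?thesis using bnd NL PL eta0 iff unfolding N_def P_def by blast
qed

end
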